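(* Let $\tilde c(n)$ be the number of (isomorphism classes of) trees $T\in\mathcal{T}_n$ with $\mathcal{C}(T)=c_n$. Then $\tilde c(1)=1$ and for every $n\ge2$, $$\tilde c(n)=\sum_{(n_a,n_b)\in\widetilde{QB}(n)}\tilde c(n_a)\,\tilde c(n_b)+\binom{\tilde c(n/2)+1}{2}\,\delta_{even}(n),$$ where $\widetilde{QB}(n)=\{(n_a,n_b)\in QB(n): n_a>n_b\}$ and $\delta_{even}(n)=1$ if $n$ is even and $0$ otherwise.
   Context: Bifurcating trees: rooted trees in which every internal node has exactly two children; $\mathcal{T}_n$ is the set of isomorphism classes of bifurcating trees with $n$ leaves. The Colless index is $\mathcal{C}(T)=\sum_{v}|\kappa_T(v_1)-\kappa_T(v_2)|$, summed over internal nodes $v$ with children $v_1,v_2$, where $\kappa_T(w)$ is the number of leaves descending from $w$; $c_n=\min\{\mathcal{C}(T):T\in\mathcal{T}_n\}$. For $n\ge2$, $QB(n)=\{(n_a,n_b)\in\mathbb{N}^2: n_a\ge n_b\ge1,\ n_a+n_b=n,\ c_{n_a}+c_{n_b}+n_a-n_b=c_n\}$. *)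

theory Defs
  imports Main
begin

text \<open>Bifurcating (rooted, every internal node has exactly two children) trees,
  represented as ordered binary trees; isomorphism classes are obtained
  by quotienting by the rooted-tree isomorphism relation (swapping children).\<close>

datatype btree = Leaf | Node btree btree

fun leaves :: "btree \<Rightarrow> nat" where
  "leaves Leaf = 1"
| "leaves (Node l r) = leaves l + leaves r"

fun colless :: "btree \<Rightarrow> nat" where
  "colless Leaf = 0"
| "colless (Node l r) = colless l + colless r + nat \<bar>int (leaves l) - int (leaves r)\<bar>"

inductive tree_iso :: "btree \<Rightarrow> btree \<Rightarrow> bool" where
  iso_leaf: "tree_iso Leaf Leaf"
| iso_node: "tree_iso l l' \<Longrightarrow> tree_iso r r' \<Longrightarrow> tree_iso (Node l r) (Node l' r')"
| iso_swap: "tree_iso l r' \<Longrightarrow> tree_iso r l' \<Longrightarrow> tree_iso (Node l r) (Node l' r')"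

definition iso_rel :: "(btree \<times> btree) set" where
  "iso_rel = {(S, T). tree_iso S T}"

definition min_colless :: "nat \<Rightarrow> nat" where
  "min_colless n = Min (colless ` {T. leaves T = n})"

definition num_min :: "nat \<Rightarrow> nat" where
  "num_min n = card ({T. leaves T = n \<and> colless T = min_colless n} // iso_rel)"

definition QB :: "nat \<Rightarrow> (nat \<times> nat) set" where
  "QB n = {(na, nb). na \<ge> nb \<and> nb \<ge> 1 \<and> na + nb = n \<and>
                     min_colless na + min_colless nb + (na - nb) = min_colless n}"

definition QB_strict :: "nat \<Rightarrow> (nat \<times> nat) set" where
  "QB_strict n = {(na, nb) \<in> QB n. na > nb}"

end

theory Submission imports Defs "HOL-Library.Nat_Bijection" begin

function bc :: "nat \<Rightarrow> nat" where
  "bc n = (if n \<le> 1 then 0 else bc ((n+1) div 2) + bc (n div 2) + n mod 2)"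
  by auto
termination by (relation "measure id") auto

declare bc.simps[simp del]

lemma bc_1[simp]: "bc 1 = 0" by (simp add: bc.simps)
lemma bc_Suc0[simp]: "bc (Suc 0) = 0" by (simp add: bc.simps)
lemma bc_rec: "n \<ge> 2 \<Longrightarrow> bc n = bc ((n+1) div 2) + bc (n div 2) + n mod 2"
  by (subst bc.simps) simp
lemma bc_double: "m \<ge> 1 \<Longrightarrow> bc (2*m) = 2 * bc m"
proof -
  assume "m \<ge> 1"
  then have "bc (2*m) = bc ((2*m+1) div 2) + bc (2*m div 2) + (2*m) mod 2" by (intro bc_rec) simp
  also have "(2*m+1) div 2 = m" by simp
  finally show ?thesis by simp
qed

lemma halves_aux: "a \<le> (1::nat) \<Longrightarrow> b \<le> 1 \<Longrightarrow>
  ((2*p+a+(2*q+b)+1) div 2 = (p+a)+q \<and> (2*p+a+(2*q+b)) div 2 = p+(q+b)) \<or>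
  ((2*p+a+(2*q+b)+1) div 2 = p+(q+b) \<and> (2*p+a+(2*q+b)) div 2 = (p+a)+q)"
proof -
  assume "a \<le> 1" "b \<le> 1"
  then have "a = 0 \<or> a = 1" "b = 0 \<or> b = 1" by auto
  then show ?thesis by (elim disjE) simp_all
qed

lemma bc_sub_aux:
  "\<forall>x y. x + y = s \<longrightarrow> x \<ge> 1 \<longrightarrow> y \<ge> 1 \<longrightarrow> bc (x+y) \<le> bc x + bc y + (max x y - min x y)"
proof (induction s rule: less_induct)
  case (less s)
  have IH: "bc (x+y) \<le> bc x + bc y + (max x y - min x y)"
    if "x + y < s" "x \<ge> 1" "y \<ge> 1" for x y using less that by blast
  have main: "bc (x+y) \<le> bc x + bc y + (x - y)" if "x+y = s" "x \<ge> y" "y \<ge> 1" for x y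
  proof -
    have "x = y \<or> (x > y \<and> y = 1) \<or> (x > y \<and> y \<ge> 2)" using that by linarith
    then consider "x = y" | "x > y" "y = 1" | "x > y" "y \<ge> 2" by blast
    then show ?thesis
    proof cases
      case 1
      then show ?thesis using bc_double[of x] that by (simp add: mult_2)
    next
      case 2
      define x1 where "x1 = (x+1) div 2"
      define x2 where "x2 = x div 2"
      have x2: "x2 \<ge> 1" using 2 by (simp add: x2_def)
      have bx: "bc x = bc x1 + bc x2 + x mod 2" using 2 bc_rec[of x] by (simp add: x1_def x2_def)
      have i1: "bc (x2+1) \<le> bc x2 + (x2 - 1)" proof -
        have "x2 + 1 < s" using 2 that unfolding x2_def by linarith
        then show ?thesis using IH[of x2 1] x2 by simp
      qed
      have bn: "bc (x+1) = bc x1 + bc (x2+1) + (1 - x mod 2)"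
      proof (cases "even x")
        case True
        then have h: "(x+1+1) div 2 = x2 + 1" "(x+1) div 2 = x1" "(x+1) mod 2 = 1 - x mod 2"
          by (auto simp: x1_def x2_def elim!: evenE)
        have "x + 1 \<ge> 2" using 2 by simp
        from bc_rec[OF this, unfolded h] show ?thesis by linarith
      next
        case False
        then have h: "(x+1+1) div 2 = x1" "(x+1) div 2 = x2 + 1" "(x+1) mod 2 = 1 - x mod 2"
          by (auto simp: x1_def x2_def elim!: oddE)
        have "x + 1 \<ge> 2" using 2 by simp
        from bc_rec[OF this, unfolded h] show ?thesis by linarith
      qed
      have "x2 \<le> x - 1" using 2 unfolding x2_def by linarith
      then show ?thesis using bx i1 bn 2 by simp
    next
      case 3
      define x1 where "x1 = (x+1) div 2"
      define x2 where "x2 = x div 2"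
      define y1 where "y1 = (y+1) div 2"
      define y2 where "y2 = y div 2"
      have bx: "bc x = bc x1 + bc x2 + x mod 2" using 3 bc_rec[of x] by (simp add: x1_def x2_def)
      have by': "bc y = bc y1 + bc y2 + y mod 2" using 3 bc_rec[of y] by (simp add: y1_def y2_def)
      have pos: "x1 \<ge> 1" "x2 \<ge> 1" "y1 \<ge> 1" "y2 \<ge> 1" using 3 by (auto simp: x1_def x2_def y1_def y2_def)
      have ord: "x1 \<ge> y2" "x2 \<ge> y1" using 3 unfolding x1_def x2_def y1_def y2_def by linarith+
      have sm: "x1 + y2 < s" "x2 + y1 < s" using 3 that pos unfolding x1_def x2_def y1_def y2_def by linarith+
      have i1: "bc (x1+y2) \<le> bc x1 + bc y2 + (x1 - y2)" using IH[OF sm(1)] pos ord by simp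
      have i2: "bc (x2+y1) \<le> bc x2 + bc y1 + (x2 - y1)" using IH[OF sm(2)] pos ord by simp
      have halves: "((x+y+1) div 2 = x1 + y2 \<and> (x+y) div 2 = x2 + y1) \<or>
                    ((x+y+1) div 2 = x2 + y1 \<and> (x+y) div 2 = x1 + y2)"
      proof -
        have e1: "2 * x2 + x mod 2 = x" "2 * y2 + y mod 2 = y" unfolding x2_def y2_def by simp_all
        have e2: "x2 + x mod 2 = x1" "y2 + y mod 2 = y1" unfolding x1_def x2_def y1_def y2_def by presburger+
        have "x mod 2 \<le> 1" "y mod 2 \<le> 1" by auto
        from halves_aux[OF this, of x2 y2] show ?thesis unfolding e1 e2 .
      qed
      have md: "(x+y) mod 2 \<le> x mod 2 + y mod 2" by presburger
      have "x + y \<ge> 2" using 3 by simp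
      note e = bc_rec[OF this]
      have bn: "bc (x+y) = bc (x1+y2) + bc (x2+y1) + (x+y) mod 2"
      proof (cases "(x+y+1) div 2 = x1 + y2 \<and> (x+y) div 2 = x2 + y1")
        case True
        then have h: "(x+y+1) div 2 = x1 + y2" "(x+y) div 2 = x2 + y1" by auto
        from e[unfolded h] show ?thesis .
      next
        case False
        then have h: "(x+y+1) div 2 = x2 + y1" "(x+y) div 2 = x1 + y2" using halves by auto
        from e[unfolded h] show ?thesis by linarith
      qed
      have "x1 + x2 = x" "y1 + y2 = y" unfolding x1_def x2_def y1_def y2_def by presburger+
      then show ?thesis using bx by' i1 i2 bn md ord by linarith
    qed
  qed
  show ?case
  proof (intro allI impI)
    fix x y assume h: "x + y = s" "x \<ge> 1" "y \<ge> 1"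
    show "bc (x+y) \<le> bc x + bc y + (max x y - min x y)"
    proof (cases "x \<ge> y")
      case True then show ?thesis using main[OF h(1) True h(3)] by simp
    next
      case False then show ?thesis using main[of y x] h by (simp add: add.commute)
    qed
  qed
qed

lemma bc_sub: "x \<ge> 1 \<Longrightarrow> y \<ge> 1 \<Longrightarrow> bc (x+y) \<le> bc x + bc y + nat \<bar>int x - int y\<bar>"
proof -
  assume "x \<ge> 1" "y \<ge> 1"
  then have "bc (x+y) \<le> bc x + bc y + (max x y - min x y)" using bc_sub_aux[of "x+y"] by blast
  moreover have "max x y - min x y = nat \<bar>int x - int y\<bar>" by (cases "x \<le> y") (auto simp: max_def min_def)
  ultimately show ?thesis by simp
qed

lemma leaves_pos: "leaves T \<ge> 1"
  by (induction T) auto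

lemma colless_ge: "bc (leaves T) \<le> colless T"
proof (induction T)
  case Leaf then show ?case by simp
next
  case (Node l r)
  have "bc (leaves l + leaves r) \<le> bc (leaves l) + bc (leaves r) + nat \<bar>int (leaves l) - int (leaves r)\<bar>"
    using bc_sub leaves_pos by blast
  then show ?case using Node by simp
qed

lemma exists_bal: "n \<ge> 1 \<Longrightarrow> \<exists>T. leaves T = n \<and> colless T = bc n"
proof (induction n rule: less_induct)
  case (less n)
  show ?case
  proof (cases "n = 1")
    case True then show ?thesis by (intro exI[of _ Leaf]) simp
  next
    case False
    then have n2: "n \<ge> 2" using less by simp
    obtain l where l: "leaves l = (n+1) div 2" "colless l = bc ((n+1) div 2)"
    proof -
      have "(n+1) div 2 < n" "(n+1) div 2 \<ge> 1" using n2 by auto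
      then show ?thesis using less(1)[of "(n+1) div 2"] that by blast
    qed
    obtain r where r: "leaves r = n div 2" "colless r = bc (n div 2)"
    proof -
      have "n div 2 < n" "n div 2 \<ge> 1" using n2 by auto
      then show ?thesis using less(1)[of "n div 2"] that by blast
    qed
    have "(n+1) div 2 = n div 2 + n mod 2" by presburger
    then have "nat \<bar>int ((n+1) div 2) - int (n div 2)\<bar> = n mod 2" by simp
    moreover have "(n+1) div 2 + n div 2 = n" by presburger
    ultimately show ?thesis using l r bc_rec[OF n2]
      by (intro exI[of _ "Node l r"]) auto
  qed
qed

lemma finite_leaves: "finite {T. leaves T = n}"
proof (induction n rule: less_induct)
  case (less n)
  have "{T. leaves T = n} \<subseteq> (if n = 1 then {Leaf} else {}) \<union>
     (\<Union>a\<in>{1..<n}. (\<lambda>(l,r). Node l r) ` ({l. leaves l = a} \<times> {r. leaves r = n - a}))"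
  proof
    fix T assume "T \<in> {T. leaves T = n}"
    then show "T \<in> (if n = 1 then {Leaf} else {}) \<union>
     (\<Union>a\<in>{1..<n}. (\<lambda>(l,r). Node l r) ` ({l. leaves l = a} \<times> {r. leaves r = n - a}))"
    proof (cases T)
      case (Node l r)
      then show ?thesis using \<open>T \<in> _\<close> leaves_pos[of l] leaves_pos[of r]
        by (auto intro!: bexI[of _ "leaves l"])
    qed auto
  qed
  moreover have "finite ((if n = 1 then {Leaf} else {}) \<union>
     (\<Union>a\<in>{1..<n}. (\<lambda>(l,r). Node l r) ` ({l. leaves l = a} \<times> {r. leaves r = n - a})))"
    using less by auto
  ultimately show ?case by (rule finite_subset)
qed

lemma min_colless_eq: "n \<ge> 1 \<Longrightarrow> min_colless n = bc n"
proof -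
  assume n: "n \<ge> 1"
  obtain T where T: "leaves T = n" "colless T = bc n" using exists_bal[OF n] by blast
  show ?thesis unfolding min_colless_def
  proof (rule Min_eqI)
    show "finite (colless ` {T. leaves T = n})" using finite_leaves by simp
    show "\<And>y. y \<in> colless ` {T. leaves T = n} \<Longrightarrow> bc n \<le> y" using colless_ge by auto
    show "bc n \<in> colless ` {T. leaves T = n}" using T by force
  qed
qed

fun enc :: "btree \<Rightarrow> nat" where
  "enc Leaf = 0"
| "enc (Node l r) = Suc (prod_encode (enc l, enc r))"

lemma enc_inj: "enc S = enc T \<Longrightarrow> S = T"
proof (induction S arbitrary: T)
  case Leaf then show ?case by (cases T) auto
next
  case (Node l r) then show ?case by (cases T) auto
qed

definition mk :: "btree \<Rightarrow> btree \<Rightarrow> btree" where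
  "mk x y = (if enc x \<le> enc y then Node x y else Node y x)"

lemma mk_sym: "mk x y = mk y x"
  unfolding mk_def using enc_inj by fastforce

lemma mk_eq: "mk x y = mk x' y' \<longleftrightarrow> (x = x' \<and> y = y') \<or> (x = y' \<and> y = x')"
  unfolding mk_def using enc_inj by (auto split: if_splits)

lemma mk_Node: "\<exists>a b. mk x y = Node a b \<and> ((a = x \<and> b = y) \<or> (a = y \<and> b = x))"
  unfolding mk_def by auto

lemma leaves_mk[simp]: "leaves (mk x y) = leaves x + leaves y"
  unfolding mk_def by auto

lemma colless_mk[simp]: "colless (mk x y) = colless x + colless y + nat \<bar>int (leaves x) - int (leaves y)\<bar>"
  unfolding mk_def by auto

fun canon :: "btree \<Rightarrow> btree" where
  "canon Leaf = Leaf"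
| "canon (Node l r) = mk (canon l) (canon r)"

lemma leaves_canon[simp]: "leaves (canon T) = leaves T"
  by (induction T) auto

lemma colless_canon[simp]: "colless (canon T) = colless T"
  by (induction T) auto

lemma canon_Leaf_iff: "canon T = Leaf \<longleftrightarrow> T = Leaf"
  by (cases T) (auto simp: mk_def)

lemma iso_canon1: "tree_iso S T \<Longrightarrow> canon S = canon T"
  by (induction rule: tree_iso.induct) (auto intro: mk_sym)

lemma iso_canon2: "canon S = canon T \<Longrightarrow> tree_iso S T"
proof (induction S arbitrary: T)
  case Leaf
  then have "T = Leaf" using canon_Leaf_iff by metis
  then show ?case by (simp add: iso_leaf)
next
  case (Node l r)
  then obtain l' r' where T: "T = Node l' r'" using canon_Leaf_iff by (cases T) (auto simp: mk_def split: if_splits)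
  then have "mk (canon l) (canon r) = mk (canon l') (canon r')" using Node by simp
  then have "(canon l = canon l' \<and> canon r = canon r') \<or> (canon l = canon r' \<and> canon r = canon l')"
    by (simp add: mk_eq)
  then show ?case using Node T by (auto intro: iso_node iso_swap)
qed

lemma iso_iff: "tree_iso S T \<longleftrightarrow> canon S = canon T"
  using iso_canon1 iso_canon2 by blast

lemma card_quot: "card (A // iso_rel) = card (canon ` A)"
proof -
  have r: "iso_rel `` {x} = {y. canon y = canon x}" for x
    unfolding iso_rel_def by (auto simp: iso_iff)
  have "A // iso_rel = (\<lambda>x. {y. canon y = canon x}) ` A"
    unfolding quotient_def r by blast
  also have "\<dots> = (\<lambda>c. {y. canon y = c}) ` (canon ` A)"
    by (simp add: image_image)
  finally have "A // iso_rel = (\<lambda>c. {y. canon y = c}) ` (canon ` A)" .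
  moreover have "inj_on (\<lambda>c. {y. canon y = c}) (canon ` A)"
    by (auto simp: inj_on_def)
  ultimately show ?thesis by (simp add: card_image)
qed

definition Ms :: "nat \<Rightarrow> btree set" where
  "Ms n = {T. leaves T = n \<and> colless T = min_colless n}"

definition K :: "nat \<Rightarrow> btree set" where
  "K n = canon ` Ms n"

lemma num_min_K: "num_min n = card (K n)"
  unfolding num_min_def K_def Ms_def by (rule card_quot)

lemma Ms_iff: "m \<ge> 1 \<Longrightarrow> T \<in> Ms m \<longleftrightarrow> leaves T = m \<and> colless T = bc m"
  unfolding Ms_def using min_colless_eq[of m] by simp

lemma QB_iff: "n \<ge> 1 \<Longrightarrow> (a, b) \<in> QB n \<longleftrightarrow> a \<ge> b \<and> b \<ge> 1 \<and> a + b = n \<and> bc a + bc b + (a - b) = bc n"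
proof -
  assume n: "n \<ge> 1"
  have "b \<ge> 1 \<Longrightarrow> a \<ge> b \<Longrightarrow> min_colless a = bc a \<and> min_colless b = bc b"
    using min_colless_eq[of a] min_colless_eq[of b] by simp
  then show ?thesis unfolding QB_def using min_colless_eq[OF n] by auto
qed

lemma finite_K: "finite (K n)"
proof -
  have "Ms n \<subseteq> {T. leaves T = n}" unfolding Ms_def by auto
  then have "finite (Ms n)" using finite_leaves finite_subset by blast
  then show ?thesis unfolding K_def by simp
qed

lemma K_leaves: "x \<in> K n \<Longrightarrow> leaves x = n"
  unfolding K_def Ms_def by auto

lemma K_rec: "n \<ge> 2 \<Longrightarrow> K n = (\<Union>p\<in>QB n. (\<lambda>(x,y). mk x y) ` (K (fst p) \<times> K (snd p)))"
proof
  assume n: "n \<ge> 2"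
  show "K n \<subseteq> (\<Union>p\<in>QB n. (\<lambda>(x,y). mk x y) ` (K (fst p) \<times> K (snd p)))"
  proof
    fix z assume "z \<in> K n"
    then obtain T where T: "T \<in> Ms n" "z = canon T" unfolding K_def by auto
    then have TT: "leaves T = n" "colless T = bc n" using Ms_iff[of n T] n by auto
    then obtain l r where lr: "T = Node l r" using n by (cases T) auto
    define a where "a = leaves l"
    define b where "b = leaves r"
    have ab: "a \<ge> 1" "b \<ge> 1" "a + b = n" using leaves_pos TT lr by (auto simp: a_def b_def)
    have c1: "bc a \<le> colless l" "bc b \<le> colless r" using colless_ge by (auto simp: a_def b_def)
    have c2: "bc n \<le> bc a + bc b + nat \<bar>int a - int b\<bar>" using bc_sub[OF ab(1,2)] ab(3) by simp
    have c3: "colless l + colless r + nat \<bar>int a - int b\<bar> = bc n" using TT lr by (simp add: a_def b_def)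
    have "colless l = bc a" "colless r = bc b" using c1 c2 c3 by linarith+
    then have lM: "l \<in> Ms a" and rM: "r \<in> Ms b" using Ms_iff[of a l] Ms_iff[of b r] ab by (simp_all add: a_def b_def)
    have eq: "bc a + bc b + nat \<bar>int a - int b\<bar> = bc n" using c1 c2 c3 by linarith
    show "z \<in> (\<Union>p\<in>QB n. (\<lambda>(x,y). mk x y) ` (K (fst p) \<times> K (snd p)))"
    proof (cases "a \<ge> b")
      case True
      then have "(a, b) \<in> QB n" using QB_iff[of n a b] n ab eq by auto
      moreover have "z = (\<lambda>(x,y). mk x y) (canon l, canon r)" using T lr by simp
      moreover have "(canon l, canon r) \<in> K (fst (a,b)) \<times> K (snd (a,b))" using lM rM unfolding K_def by simp
      ultimately show ?thesis by blast
    next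
      case False
      then have "(b, a) \<in> QB n" using QB_iff[of n b a] n ab eq by auto
      moreover have "z = (\<lambda>(x,y). mk x y) (canon r, canon l)" using T lr mk_sym by simp
      moreover have "(canon r, canon l) \<in> K (fst (b,a)) \<times> K (snd (b,a))" using lM rM unfolding K_def by simp
      ultimately show ?thesis by blast
    qed
  qed
  show "(\<Union>p\<in>QB n. (\<lambda>(x,y). mk x y) ` (K (fst p) \<times> K (snd p))) \<subseteq> K n"
  proof
    fix z assume "z \<in> (\<Union>p\<in>QB n. (\<lambda>(x,y). mk x y) ` (K (fst p) \<times> K (snd p)))"
    then obtain a b x y where p: "(a, b) \<in> QB n" and x: "x \<in> K a" and y: "y \<in> K b" and z: "z = mk x y"
      by auto
    from p have ab: "a \<ge> b" "b \<ge> 1" "a + b = n" "bc a + bc b + (a - b) = bc n" using QB_iff[of n a b] n by auto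
    obtain l where l: "l \<in> Ms a" "x = canon l" using x unfolding K_def by auto
    obtain r where r: "r \<in> Ms b" "y = canon r" using y unfolding K_def by auto
    have "leaves l = a" "colless l = bc a" using l Ms_iff[of a l] ab by auto
    moreover have "leaves r = b" "colless r = bc b" using r Ms_iff[of b r] ab by auto
    ultimately have nm: "Node l r \<in> Ms n" using Ms_iff[of n "Node l r"] ab n by simp
    have me: "mk x y = canon (Node l r)" using l r by simp
    have "mk x y \<in> canon ` Ms n" by (rule image_eqI[where f=canon, OF me nm])
    then show "z \<in> K n" unfolding K_def z by simp
  qed
qed

lemma choose_step: "Suc (Suc k) choose 2 = Suc k + (Suc k choose 2)"
  by (simp add: numeral_2_eq_2)

lemma card_pairs: "finite E \<Longrightarrow> card {(i, j). i \<in> E \<and> j \<in> E \<and> i \<le> (j::nat)} = (card E + 1) choose 2"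
proof (induction E rule: finite_linorder_max_induct)
  case empty then show ?case by simp
next
  case (insert b A)
  have eq: "{(i, j). i \<in> insert b A \<and> j \<in> insert b A \<and> i \<le> j} =
     {(i, j). i \<in> A \<and> j \<in> A \<and> i \<le> j} \<union> (\<lambda>i. (i, b)) ` insert b A"
    using insert(2) by auto
  have disj: "{(i, j). i \<in> A \<and> j \<in> A \<and> i \<le> j} \<inter> (\<lambda>i. (i, b)) ` insert b A = {}"
    using insert(2) by auto
  have fin: "finite {(i, j). i \<in> A \<and> j \<in> A \<and> i \<le> j}"
    by (rule finite_subset[of _ "A \<times> A"]) (use insert(1) in auto)
  have bA: "b \<notin> A" using insert(2) by auto
  have "card ((\<lambda>i. (i, b)) ` insert b A) = card (insert b A)"
    by (rule card_image) (auto simp: inj_on_def)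
  then have ci: "card ((\<lambda>i. (i, b)) ` insert b A) = card A + 1"
    using insert(1) bA by simp
  have "card {(i, j). i \<in> insert b A \<and> j \<in> insert b A \<and> i \<le> j} = ((card A + 1) choose 2) + (card A + 1)"
    unfolding eq using card_Un_disjoint[OF fin _ disj] insert(1,3) ci by simp
  also have "\<dots> = (card (insert b A) + 1) choose 2"
    using insert(1) bA choose_step[of "card A"] by simp
  finally show ?case .
qed

lemma card_sym_pairs: "finite K' \<Longrightarrow> card ((\<lambda>(x,y). mk x y) ` (K' \<times> K')) = (card K' + 1) choose 2"
proof -
  assume fK: "finite K'"
  define P where "P = {(x, y). x \<in> K' \<and> y \<in> K' \<and> enc x \<le> enc y}"
  have eq1: "(\<lambda>(x,y). mk x y) ` (K' \<times> K') = (\<lambda>(x,y). Node x y) ` P"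
  proof
    show "(\<lambda>(x,y). mk x y) ` (K' \<times> K') \<subseteq> (\<lambda>(x,y). Node x y) ` P"
    proof
      fix z assume "z \<in> (\<lambda>(x,y). mk x y) ` (K' \<times> K')"
      then obtain x y where xy: "x \<in> K'" "y \<in> K'" "z = mk x y" by auto
      show "z \<in> (\<lambda>(x,y). Node x y) ` P"
      proof (cases "enc x \<le> enc y")
        case True
        then have "z = (\<lambda>(x,y). Node x y) (x, y)" "(x, y) \<in> P" using xy unfolding mk_def P_def by simp_all
        then show ?thesis by (rule image_eqI)
      next
        case False
        then have "z = (\<lambda>(x,y). Node x y) (y, x)" "(y, x) \<in> P" using xy unfolding mk_def P_def by simp_all
        then show ?thesis by (rule image_eqI)
      qed
    qed
    show "(\<lambda>(x,y). Node x y) ` P \<subseteq> (\<lambda>(x,y). mk x y) ` (K' \<times> K')"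
    proof
      fix z assume "z \<in> (\<lambda>(x,y). Node x y) ` P"
      then obtain x y where xy: "x \<in> K'" "y \<in> K'" "enc x \<le> enc y" "z = Node x y" unfolding P_def by auto
      then have "z = (\<lambda>(x,y). mk x y) (x, y)" "(x, y) \<in> K' \<times> K'" unfolding mk_def by simp_all
      then show "z \<in> (\<lambda>(x,y). mk x y) ` (K' \<times> K')" by (rule image_eqI)
    qed
  qed
  have eq2: "card ((\<lambda>(x,y). Node x y) ` P) = card P"
    by (rule card_image) (auto simp: inj_on_def)
  have eq3: "map_prod enc enc ` P = {(i, j). i \<in> enc ` K' \<and> j \<in> enc ` K' \<and> i \<le> j}"
  proof
    show "map_prod enc enc ` P \<subseteq> {(i, j). i \<in> enc ` K' \<and> j \<in> enc ` K' \<and> i \<le> j}"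
      unfolding P_def by auto
    show "{(i, j). i \<in> enc ` K' \<and> j \<in> enc ` K' \<and> i \<le> j} \<subseteq> map_prod enc enc ` P"
    proof clarify
      fix x y assume "x \<in> K'" "y \<in> K'" "enc x \<le> enc y"
      then have "(enc x, enc y) = map_prod enc enc (x, y)" "(x, y) \<in> P" unfolding P_def by simp_all
      then show "(enc x, enc y) \<in> map_prod enc enc ` P" by (rule image_eqI)
    qed
  qed
  have eq4: "card (map_prod enc enc ` P) = card P"
    by (rule card_image) (auto simp: inj_on_def intro: enc_inj)
  have eq5: "card (enc ` K') = card K'"
    by (rule card_image) (auto simp: inj_on_def intro: enc_inj)
  have "card ((\<lambda>(x,y). mk x y) ` (K' \<times> K')) = card (map_prod enc enc ` P)"
    unfolding eq1 eq2 eq4 ..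
  also have "\<dots> = (card (enc ` K') + 1) choose 2" unfolding eq3 using fK by (intro card_pairs) simp
  finally show ?thesis unfolding eq5 .
qed

lemma card_strict_pairs: "a > b \<Longrightarrow> card ((\<lambda>(x,y). mk x y) ` (K a \<times> K b)) = card (K a) * card (K b)"
proof -
  assume "a > b"
  have "inj_on (\<lambda>(x,y). mk x y) (K a \<times> K b)"
    using \<open>a > b\<close> by (auto simp: inj_on_def mk_eq dest: K_leaves)
  then show ?thesis by (simp add: card_image card_cartesian_product)
qed

lemma QB_finite: "finite (QB n)"
  by (rule finite_subset[of _ "{..n} \<times> {..n}"]) (auto simp: QB_def)

lemma QB_split: "n \<ge> 2 \<Longrightarrow> QB n = QB_strict n \<union> (if even n then {(n div 2, n div 2)} else {})"
proof -
  assume n: "n \<ge> 2"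
  have "(n div 2, n div 2) \<in> QB n" if "even n"
  proof -
    obtain m where m: "n = 2 * m" using \<open>even n\<close> by blast
    then have "m \<ge> 1" using n by simp
    then show ?thesis using QB_iff[of n m m] n m bc_double[of m] by simp
  qed
  moreover have "p \<in> QB_strict n \<or> (even n \<and> p = (n div 2, n div 2))" if "p \<in> QB n" for p
  proof -
    obtain a b where p: "p = (a, b)" by (cases p)
    have ab: "a \<ge> b" "a + b = n" using that p unfolding QB_def by auto
    show ?thesis
    proof (cases "a > b")
      case True then show ?thesis using that p unfolding QB_strict_def by auto
    next
      case False
      then have "a = b" using ab by simp
      then have "n = 2 * a" using ab by simp
      then show ?thesis using p \<open>a = b\<close> by simp
    qed
  qed
  ultimately show ?thesis unfolding QB_strict_def by auto
qed

theorem proposition4: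
  shows "num_min 1 = 1 \<and>
    (\<forall>n\<ge>2. num_min n =
       (\<Sum>(na, nb)\<in>QB_strict n. num_min na * num_min nb)
       + ((num_min (n div 2) + 1) choose 2) * (if even n then 1 else 0))"
proof
  have "Ms 1 = {Leaf}"
  proof -
    have "leaves T = 1 \<Longrightarrow> T = Leaf" for T
    proof (cases T)
      case (Node l r)
      assume "leaves T = 1"
      then show ?thesis using Node leaves_pos[of l] leaves_pos[of r] by simp
    qed simp
    then show ?thesis using Ms_iff[of 1] by auto
  qed
  then show "num_min 1 = 1" unfolding num_min_K K_def by simp
next
  show "\<forall>n\<ge>2. num_min n =
       (\<Sum>(na, nb)\<in>QB_strict n. num_min na * num_min nb)
       + ((num_min (n div 2) + 1) choose 2) * (if even n then 1 else 0)"
  proof (intro allI impI)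
    fix n :: nat assume n: "n \<ge> 2"
    define F where "F p = (\<lambda>(x,y). mk x y) ` (K (fst p) \<times> K (snd p))" for p :: "nat \<times> nat"
    define D where "D = (if even n then {(n div 2, n div 2)} else {} :: (nat \<times> nat) set)"
    have disj: "F p \<inter> F q = {}" if "p \<in> QB n" "q \<in> QB n" "p \<noteq> q" for p q
    proof (rule ccontr)
      assume "F p \<inter> F q \<noteq> {}"
      then obtain x y x' y' where xy: "x \<in> K (fst p)" "y \<in> K (snd p)" "x' \<in> K (fst q)" "y' \<in> K (snd q)"
        "mk x y = mk x' y'" unfolding F_def by auto
      have lx: "leaves x = fst p" "leaves y = snd p" "leaves x' = fst q" "leaves y' = snd q"
        using xy K_leaves by auto
      have o: "fst p \<ge> snd p" "fst q \<ge> snd q" using that unfolding QB_def by auto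
      from xy(5) have "(x = x' \<and> y = y') \<or> (x = y' \<and> y = x')" by (simp add: mk_eq)
      then have "fst p = fst q \<and> snd p = snd q" using lx o by auto
      then show False using that by (simp add: prod_eq_iff)
    qed
    have "num_min n = card (\<Union>p\<in>QB n. F p)"
      unfolding num_min_K F_def using K_rec[OF n] by simp
    also have "\<dots> = (\<Sum>p\<in>QB n. card (F p))"
    proof (rule card_UN_disjoint)
      show "finite (QB n)" by (rule QB_finite)
      show "\<forall>i\<in>QB n. finite (F i)" by (auto simp: F_def finite_K)
      show "\<forall>i\<in>QB n. \<forall>j\<in>QB n. i \<noteq> j \<longrightarrow> F i \<inter> F j = {}" using disj by blast
    qed
    also have "\<dots> = (\<Sum>p\<in>QB_strict n. card (F p)) + (\<Sum>p\<in>D. card (F p))"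
    proof -
      have fS: "finite (QB_strict n)"
        by (rule finite_subset[OF _ QB_finite[of n]]) (auto simp: QB_strict_def)
      have fD: "finite D" by (simp add: D_def)
      have dj: "QB_strict n \<inter> D = {}" by (auto simp: QB_strict_def D_def)
      have "QB n = QB_strict n \<union> D" unfolding D_def by (rule QB_split[OF n])
      then show ?thesis using sum.union_disjoint[OF fS fD dj] by simp
    qed
    also have "(\<Sum>p\<in>QB_strict n. card (F p)) = (\<Sum>(na, nb)\<in>QB_strict n. num_min na * num_min nb)"
      by (rule sum.cong) (auto simp: F_def QB_strict_def card_strict_pairs num_min_K)
    also have "(\<Sum>p\<in>D. card (F p)) = ((num_min (n div 2) + 1) choose 2) * (if even n then 1 else 0)"
      unfolding D_def F_def by (simp add: card_sym_pairs finite_K num_min_K)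
    finally show "num_min n =
       (\<Sum>(na, nb)\<in>QB_strict n. num_min na * num_min nb)
       + ((num_min (n div 2) + 1) choose 2) * (if even n then 1 else 0)" .
  qed
qed

end
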